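(* Let $\hat B_n^-(x)=\sum_{\sigma\in\mathcal B_n,\ \sigma(1)<0}x^{\hat d_B(\sigma)}$. Then $$\sum_{n\ge1}\hat B_n^-(x)\frac{z^n}{n!}=\frac{\cos(z(x-1))+\sin(z(x-1))-1}{(x-1)\cos(z(x-1))-(x+1)\sin(z(x-1))}.$$
   Context: $\mathcal B_n$ is the set of signed permutations (bijections $\sigma$ of $\{\pm1,\dots,\pm n\}$ with $\sigma(-i)=-\sigma(i)$), written as words $\sigma(1)\cdots\sigma(n)$ with $\sigma(0)=0$. $\hat d_B(\sigma)$ is the number of $i\in\{0\}\cup[n-1]$ such that either $\sigma(i)<\sigma(i+1)$ and $i$ is even, or $\sigma(i)>\sigma(i+1)$ and $i$ is odd. *)

theory Defs
  imports "HOL-Computational_Algebra.Formal_Power_Series"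
begin

text \<open>Signed permutations of size n, in word form sigma(1)...sigma(n):
  lists of nonzero integers whose absolute values are exactly 1..n, each once.\<close>
definition signed_perms :: "nat \<Rightarrow> int list set" where
  "signed_perms n = {w. length w = n \<and> distinct (map abs w) \<and> set (map abs w) = {1..int n}}"

definition sval :: "int list \<Rightarrow> nat \<Rightarrow> int" where
  "sval w i = (if i = 0 then 0 else w ! (i - 1))"

definition dhatB :: "int list \<Rightarrow> nat" where
  "dhatB w = card {i \<in> {0..<length w}.
      (sval w i < sval w (i + 1) \<and> even i) \<or> (sval w i > sval w (i + 1) \<and> odd i)}"

definition Bhat_minus :: "nat \<Rightarrow> real \<Rightarrow> real" where
  "Bhat_minus n x = (\<Sum>w \<in> {w \<in> signed_perms n. sval w 1 < 0}. x ^ dhatB w)"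

end

theory Submission
  imports Defs
begin

unbundle fps_syntax

lemma fps_ode_zero:
  fixes Z K :: "real fps"
  assumes "fps_deriv Z = K * Z" "Z $ 0 = 0"
  shows "Z = 0"
proof -
  have "\<forall>m\<le>n. Z $ m = 0" for n
  proof (induction n)
    case 0 then show ?case using assms(2) by simp
  next
    case (Suc n)
    have "fps_deriv Z $ n = (K * Z) $ n" using assms(1) by simp
    also have "\<dots> = (\<Sum>i=0..n. K$i * Z$(n - i))" by (rule fps_mult_nth)
    also have "\<dots> = 0" using Suc by (intro sum.neutral) auto
    finally have "Z $ Suc n = 0" by simp
    then show ?case using Suc by (auto simp: le_Suc_eq)
  qed
  then show ?thesis by (intro fps_ext) auto
qed

lemma fps_main:
  fixes x :: real and Af Bf Ef :: "real fps"
  assumes x1: "x \<noteq> 1"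
    and hA: "fps_deriv Af = fps_const (1+x) * Af + fps_const (1-x) + (Af - 1) * Ef"
    and hE: "Ef = fps_const (1+x^2) * (Af - 1) + fps_const (1+x)"
    and hB: "fps_deriv Bf = Af + Bf * Ef"
    and A0: "Af $ 0 = 1" and B0: "Bf $ 0 = 0"
  shows "Bf = (fps_cos (x - 1) + fps_sin (x - 1) - 1) /
    (fps_const (x - 1) * fps_cos (x - 1) - fps_const (x + 1) * fps_sin (x - 1))"
proof -
  define X where "X = fps_const x"
  define c where "c = fps_cos (x - 1)"
  define s where "s = fps_sin (x - 1)"
  define D where "D = fps_const (x - 1) * c - fps_const (x + 1) * s"
  define N where "N = c + s - 1"
  define Q where "Q = (X - 1) * ((X - 1) * s + (X + 1) * c)"
  have k1: "fps_const (1+x) = 1 + X" "fps_const (1-x) = 1 - X" "fps_const (1+x^2) = 1 + X*X"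
     "fps_const (x-1) = X - 1" "fps_const (x+1) = X + 1" "fps_const (-(x-1)) = 1 - X"
    by (simp_all add: X_def power2_eq_square flip: fps_const_add fps_const_sub fps_const_mult fps_const_neg)
  have dc: "fps_deriv c = (1 - X) * s" unfolding c_def s_def fps_cos_deriv k1 ..
  have ds: "fps_deriv s = (X - 1) * c" unfolding c_def s_def fps_sin_deriv k1 ..
  have dX: "fps_deriv X = 0" by (simp add: X_def)
  have D': "D = (X - 1) * c - (X + 1) * s" unfolding D_def k1 ..
  have hE': "Ef = (1 + X*X) * (Af - 1) + (1 + X)" using hE unfolding k1 .
  have hA': "fps_deriv Af = (1 + X) * Af + (1 - X) + (Af - 1) * Ef" using hA unfolding k1 .
  have dE: "fps_deriv Ef = Ef * Ef + (X - 1) * (X - 1)"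
  proof -
    have "fps_deriv Ef = (1 + X*X) * fps_deriv Af" using hE' dX by (simp del: fps_deriv_eq_0_iff)
    also have "\<dots> = Ef * Ef + (X - 1) * (X - 1)" unfolding hA' hE' by algebra
    finally show ?thesis .
  qed
  have dD: "fps_deriv D = - Q"
  proof -
    have "fps_deriv D = (X-1)*fps_deriv c - (X+1)*fps_deriv s"
      unfolding D' by (simp add: dX del: fps_deriv_eq_0_iff)
    then show ?thesis unfolding dc ds Q_def by algebra
  qed
  have dQ: "fps_deriv Q = (X - 1) * (X - 1) * D"
  proof -
    have "fps_deriv Q = (X-1)*((X-1)*fps_deriv s + (X+1)*fps_deriv c)"
      unfolding Q_def by (simp add: dX del: fps_deriv_eq_0_iff)
    then show ?thesis unfolding dc ds D' by algebra
  qed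
  have Z: "D * Ef - Q = 0"
  proof (rule fps_ode_zero)
    show "fps_deriv (D * Ef - Q) = Ef * (D * Ef - Q)"
    proof -
      have "fps_deriv (D * Ef - Q) = fps_deriv D * Ef + D * fps_deriv Ef - fps_deriv Q" by simp
      then show ?thesis unfolding dD dQ dE by algebra
    qed
    have "Ef $ 0 = 1 + x" using hE A0 by simp
    then show "(D * Ef - Q) $ 0 = 0" by (simp add: D_def Q_def c_def s_def X_def algebra_simps)
  qed
  then have DE: "D * Ef = Q" by simp
  have sq: "c * c + s * s = 1" using fps_sin_cos_sum_of_squares[of "x-1"]
    by (simp add: c_def s_def power2_eq_square)
  have "(1 + X*X) * (D * Af - fps_deriv N) = D * ((1 + X*X) * (Af - 1)) + (1 + X*X) * D - (1 + X*X) * fps_deriv N"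
    by (simp add: algebra_simps del: fps_deriv_eq_0_iff)
  also have "(1 + X*X) * (Af - 1) = Ef - (1 + X)" using hE' by simp
  also have "D * (Ef - (1 + X)) + (1 + X*X) * D - (1 + X*X) * fps_deriv N = 0"
  proof -
    have dN: "fps_deriv N = (1-X)*s + (X-1)*c" by (simp add: N_def dc ds)
    show ?thesis unfolding dN D' using DE unfolding D' Q_def by algebra
  qed
  finally have "(1 + X*X) * (D * Af - fps_deriv N) = 0" .
  moreover have "1 + X*X \<noteq> 0"
  proof
    assume "1 + X*X = 0"
    then have "(1 + X*X) $ 0 = 0" by simp
    then have "1 + x*x = 0" by (simp add: X_def)
    moreover have "0 \<le> x*x" by simp
    ultimately show False by linarith
  qed
  ultimately have DA: "D * Af = fps_deriv N" by simp
  have "fps_deriv (D * Bf - N) = fps_deriv D * Bf + D * (Af + Bf * Ef) - fps_deriv N"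
    using hB by simp
  also have "\<dots> = 0" using dD DE DA by (simp add: algebra_simps)
  finally have "D * Bf - N = fps_const ((D * Bf - N) $ 0)" by (rule fps_deriv_eq_0_iff[THEN iffD1])
  also have "(D * Bf - N) $ 0 = 0" using B0 by (simp add: N_def c_def s_def)
  finally have DB: "D * Bf = N" by simp
  have D0: "D $ 0 \<noteq> 0" using x1 by (simp add: D_def c_def s_def)
  have "N / D = N * inverse D" by (rule fps_divide_unit[OF D0])
  also have "\<dots> = Bf * (D * inverse D)" by (simp add: DB[symmetric] algebra_simps)
  also have "D * inverse D = 1" by (rule inverse_mult_eq_1'[OF D0])
  finally show ?thesis by (simp add: N_def D_def c_def s_def)
qed


definition cnd :: "bool \<Rightarrow> int \<Rightarrow> int \<Rightarrow> bool" where
  "cnd p a b = ((p \<and> b < a) \<or> (\<not> p \<and> a < b))"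

fun cnt :: "bool \<Rightarrow> int list \<Rightarrow> nat" where
  "cnt p [] = 0"
| "cnt p [a] = 0"
| "cnt p (a # b # r) = (if cnd p a b then 1 else 0) + cnt (\<not> p) (b # r)"

lemma cnt_sum: "cnt p l = (\<Sum>i<length l - 1. if cnd (p \<noteq> odd i) (l!i) (l!Suc i) then 1 else 0)"
proof (induction p l rule: cnt.induct)
  case (3 p a b r)
  have "length (a # b # r) - 1 = Suc (length (b # r) - 1)" by simp
  then show ?case unfolding cnt.simps 3 by (simp only: sum.lessThan_Suc_shift) simp
qed simp_all

lemma dhatB_cnt: "dhatB w = cnt False (0 # w)"
proof -
  have "dhatB w = (\<Sum>i\<in>{0..<length w}. if (sval w i < sval w (i + 1) \<and> even i) \<or> (sval w i > sval w (i + 1) \<and> odd i) then 1 else 0)"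
    unfolding dhatB_def by (simp add: sum.inter_filter[symmetric])
  also have "\<dots> = (\<Sum>i<length w. if cnd (False \<noteq> odd i) ((0#w)!i) ((0#w)!Suc i) then 1 else 0)"
    by (intro sum.cong) (auto simp: sval_def cnd_def nth_Cons' atLeast0LessThan)
  also have "\<dots> = cnt False (0 # w)" by (simp add: cnt_sum)
  finally show ?thesis .
qed

lemma cnt_app: "cnt p (xs @ y # ys) = cnt p (xs @ [y]) + cnt (p \<noteq> odd (length xs)) (y # ys)"
proof (induction xs arbitrary: p)
  case Nil then show ?case by simp
next
  case (Cons a xs)
  show ?case
  proof (cases xs)
    case Nil then show ?thesis by simp
  next
    case (Cons b r)
    then show ?thesis using Cons.IH[of "\<not> p"] by simp
  qed
qed

lemma cnt_snoc: "xs \<noteq> [] \<Longrightarrow> cnt p (xs @ [y]) = cnt p xs + (if cnd (p \<noteq> odd (length xs - 1)) (last xs) y then 1 else 0)"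
proof (induction xs arbitrary: p)
  case Nil then show ?case by simp
next
  case (Cons a xs)
  show ?case
  proof (cases xs)
    case Nil then show ?thesis by simp
  next
    case (Cons b r)
    then show ?thesis using Cons.IH[of "\<not> p"] by simp
  qed
qed

lemma cnt_cons: "cnt q (c # R) = (if R = [] then 0 else (if cnd q c (hd R) then 1 else 0) + cnt (\<not> q) R)"
  by (cases R) auto

lemma cnt_uminus: "cnt p (map uminus l) = cnt (\<not> p) l"
  by (induction p l rule: cnt.induct) (auto simp: cnd_def)

definition arr :: "int set \<Rightarrow> int list set" where
  "arr S = {w. distinct (map abs w) \<and> abs ` set w = S}"

lemma arr_length: "w \<in> arr S \<Longrightarrow> length w = card S"
  unfolding arr_def using distinct_card[of "map abs w"] by auto

lemma arr_empty: "arr {} = {[]}"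
  unfolding arr_def by auto

lemma finite_arr: assumes "finite S" shows "finite (arr S)"
proof -
  have "arr S \<subseteq> {w. set w \<subseteq> S \<union> uminus ` S \<and> length w = card S}"
  proof
    fix w assume w: "w \<in> arr S"
    have "set w \<subseteq> S \<union> uminus ` S"
    proof
      fix y assume "y \<in> set w"
      then have "abs y \<in> S" using w unfolding arr_def by auto
      then show "y \<in> S \<union> uminus ` S" by (cases "y \<ge> 0") (auto simp: image_iff intro: bexI[of _ "abs y"])
    qed
    then show "w \<in> {w. set w \<subseteq> S \<union> uminus ` S \<and> length w = card S}" using arr_length[OF w] by auto
  qed
  moreover have "finite {w. set w \<subseteq> S \<union> uminus ` S \<and> length w = card S}"
    using assms by (intro finite_lists_length_eq) auto
  ultimately show ?thesis by (rule finite_subset)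
qed

lemma arr_uminus: "w \<in> arr S \<Longrightarrow> map uminus w \<in> arr S"
  unfolding arr_def by (auto simp: comp_def image_image)

lemma sum_arr_sym: "(\<Sum>w\<in>arr S. (x::real) ^ cnt False w) = (\<Sum>w\<in>arr S. x ^ cnt True w)"
proof -
  have inj: "inj_on (map uminus) (arr S)" by (intro inj_onI) (simp add: inj_map_eq_map inj_def)
  have img: "map uminus ` arr S = arr S"
  proof
    show "map uminus ` arr S \<subseteq> arr S" using arr_uminus by auto
    show "arr S \<subseteq> map uminus ` arr S"
    proof
      fix w assume "w \<in> arr S"
      then have "map uminus w \<in> arr S" by (rule arr_uminus)
      moreover have "w = map uminus (map uminus w)" by (simp add: comp_def)
      ultimately show "w \<in> map uminus ` arr S" by blast
    qed
  qed
  have "(\<Sum>w\<in>arr S. x ^ cnt True w) = (\<Sum>w\<in>map uminus ` arr S. x ^ cnt True w)" by (simp add: img)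
  also have "\<dots> = (\<Sum>w\<in>arr S. x ^ cnt True (map uminus w))" by (rule sum.reindex[OF inj, unfolded comp_def])
  also have "\<dots> = (\<Sum>w\<in>arr S. x ^ cnt False w)" by (simp add: cnt_uminus)
  finally show ?thesis by simp
qed

lemma arr_decomp:
  assumes fin: "finite S" and pos: "\<forall>s\<in>S. 0 < s" and ne: "S \<noteq> {}"
    and mdef: "m = Max S" and Tdef: "T = S - {m}"
  shows "(\<Sum>w\<in>arr S. f w) = (\<Sum>A\<in>Pow T. \<Sum>L\<in>arr A. \<Sum>R\<in>arr (T - A). \<Sum>c\<in>{m, -m}. f (L @ c # R))"
proof -
  have mS: "m \<in> S" using fin ne mdef by simp
  have m0: "0 < m" using mS pos by auto
  have Tlt: "\<forall>t\<in>T. 0 < t \<and> t < m" 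
  proof
    fix t assume t: "t \<in> T"
    then have "t \<in> S" "t \<noteq> m" using Tdef by auto
    moreover have "t \<le> m" using \<open>t \<in> S\<close> fin mdef by simp
    ultimately show "0 < t \<and> t < m" using pos by auto
  qed
  have finT: "finite T" using fin Tdef by simp
  have ST: "S = insert m T" using mS Tdef by auto
  define I where "I = Sigma (Pow T) (\<lambda>A. arr A \<times> arr (T - A) \<times> {m,-m})"
  define h where "h = (\<lambda>(A::int set, L::int list, R::int list, c::int). L @ c # R)"
  have inj: "inj_on h I"
  proof (rule inj_onI)
    fix p q assume p: "p \<in> I" and q: "q \<in> I" and e: "h p = h q"
    obtain A L R c where pe: "p = (A, L, R, c)" by (cases p) auto
    obtain A' L' R' c' where qe: "q = (A', L', R', c')" by (cases q) auto
    have Lp: "\<forall>y\<in>set L. abs y \<noteq> m" "abs c = m" using p Tlt m0 unfolding pe I_def arr_def by auto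
    have Lq: "\<forall>y\<in>set L'. abs y \<noteq> m" "abs c' = m" using q Tlt m0 unfolding qe I_def arr_def by auto
    have eq: "L @ c # R = L' @ c' # R'" using e unfolding pe qe h_def by simp
    have "takeWhile (\<lambda>y. abs y \<noteq> m) (L @ c # R) = L" using Lp by (simp add: takeWhile_append2)
    moreover have "takeWhile (\<lambda>y. abs y \<noteq> m) (L' @ c' # R') = L'" using Lq by (simp add: takeWhile_append2)
    ultimately have LL: "L = L'" using eq by simp
    then have "c = c' \<and> R = R'" using eq by simp
    moreover have "A = A'" using p q LL unfolding pe qe I_def arr_def by auto
    ultimately show "p = q" using LL pe qe by simp
  qed
  have img: "h ` I = arr S"
  proof
    show "h ` I \<subseteq> arr S"
    proof
      fix w assume "w \<in> h ` I"
      then obtain A L R c where AI: "(A, L, R, c) \<in> I" and w: "w = L @ c # R" unfolding h_def by auto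
      have A: "A \<subseteq> T" "distinct (map abs L)" "abs ` set L = A" "distinct (map abs R)" "abs ` set R = T - A" "abs c = m"
        using AI m0 unfolding I_def arr_def by auto
      have "m \<notin> T" using Tdef by simp
      then show "w \<in> arr S" unfolding w arr_def using A ST by auto
    qed
    show "arr S \<subseteq> h ` I"
    proof
      fix w assume w: "w \<in> arr S"
      then have "m \<in> abs ` set w" using mS unfolding arr_def by auto
      then obtain c where c: "c \<in> set w" "abs c = m" by auto
      then obtain L R where wLR: "w = L @ c # R" by (meson split_list)
      have d: "distinct (map abs L)" "distinct (map abs R)" "m \<notin> abs ` set L" "m \<notin> abs ` set R"
         "abs ` set L \<inter> abs ` set R = {}" "abs ` set L \<union> insert m (abs ` set R) = S"
        using w c unfolding wLR arr_def by auto
      define A where "A = abs ` set L"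
      have "A \<subseteq> T" using d Tdef unfolding A_def by auto
      moreover have "abs ` set R = T - A" using d Tdef unfolding A_def by auto
      moreover have "c \<in> {m, -m}" using c by auto
      ultimately have "(A, L, R, c) \<in> I" unfolding I_def arr_def A_def using d by auto
      moreover have "h (A, L, R, c) = w" unfolding h_def wLR by simp
      ultimately show "w \<in> h ` I" by force
    qed
  qed
  have "(\<Sum>w\<in>arr S. f w) = (\<Sum>p\<in>I. f (h p))"
    using sum.reindex_bij_betw[of h I "arr S" f] inj img unfolding bij_betw_def by simp
  also have "\<dots> = (\<Sum>A\<in>Pow T. \<Sum>p\<in>arr A \<times> arr (T - A) \<times> {m,-m}. f (h (A, p)))"
    unfolding I_def
  proof (subst sum.Sigma)
    show "finite (Pow T)" using finT by simp
    show "\<forall>A\<in>Pow T. finite (arr A \<times> arr (T - A) \<times> {m, - m})"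
    proof
      fix A assume "A \<in> Pow T"
      then have "finite A" using finT by (auto intro: finite_subset)
      then show "finite (arr A \<times> arr (T - A) \<times> {m, - m})" using finT finite_arr by auto
    qed
  qed simp
  also have "\<dots> = (\<Sum>A\<in>Pow T. \<Sum>L\<in>arr A. \<Sum>R\<in>arr (T - A). \<Sum>c\<in>{m, -m}. f (L @ c # R))"
    by (simp add: h_def sum.cartesian_product split_def)
  finally show ?thesis .
qed

definition kk :: "real \<Rightarrow> nat \<Rightarrow> nat \<Rightarrow> real" where
  "kk x j t = 1 + x ^ ((if j = 0 then 0 else 1) + (if t > 0 then 1 else 0))"

lemma sum_c:
  assumes m0: "0 < m" and bL: "\<forall>y\<in>set L. abs y < m" and bR: "\<forall>y\<in>set R. abs y < m"
  shows "(\<Sum>c\<in>{m,-m}. (x::real) ^ cnt True (L @ c # R))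
     = x ^ cnt True L * x ^ cnt (odd (length L)) R * kk x (length L) (length R)"
proof -
  have mm: "m \<noteq> -m" using m0 by simp
  have e: "(\<Sum>c\<in>{m,-m}. (x::real) ^ cnt True (L @ c # R)) = x ^ cnt True (L @ m # R) + x ^ cnt True (L @ (-m) # R)"
    using mm by simp
  have hR: "R \<noteq> [] \<Longrightarrow> hd R < m \<and> -m < hd R" using bR by (cases R) auto
  have lL: "L \<noteq> [] \<Longrightarrow> last L < m \<and> -m < last L" using bL by (cases L rule: rev_cases) auto
  show ?thesis
  proof (cases "L = []")
    case True
    then show ?thesis unfolding e using hR
      by (cases "R = []") (simp_all add: cnt_cons cnd_def kk_def ring_distribs mult_ac)
  next
    case False
    have c1: "cnt True (L @ c # R) = cnt True L + (if cnd (odd (length L)) (last L) c then 1 else 0)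
        + (if R = [] then 0 else (if cnd (even (length L)) c (hd R) then 1 else 0) + cnt (odd (length L)) R)" for c
    proof -
      have "odd (length L - 1) = even (length L)" using False by (cases L) auto
      then show ?thesis using False unfolding cnt_app[of True L c R] cnt_snoc[OF False] cnt_cons by simp
    qed
    have a1: "cnd (odd (length L)) (last L) m \<longleftrightarrow> even (length L)"
      and a2: "cnd (odd (length L)) (last L) (-m) \<longleftrightarrow> odd (length L)"
      using lL[OF False] by (auto simp: cnd_def)
    have a3: "R \<noteq> [] \<Longrightarrow> cnd (even (length L)) m (hd R) \<longleftrightarrow> even (length L)"
      and a4: "R \<noteq> [] \<Longrightarrow> cnd (even (length L)) (-m) (hd R) \<longleftrightarrow> odd (length L)"
      using hR by (auto simp: cnd_def)
    have kL: "kk x (length L) (length R) = 1 + x ^ (1 + (if R = [] then 0 else 1))"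
      using False by (simp add: kk_def)
    define p where "p = (x::real) ^ cnt True L * x ^ cnt (odd (length L)) R"
    show ?thesis
    proof (cases "R = []"; cases "even (length L)")
      assume "R = []" "even (length L)"
      then show ?thesis unfolding e unfolding c1 kL using a1 a2 by (simp add: power_add ring_distribs mult_ac)
    next
      assume "R = []" "\<not> even (length L)"
      then show ?thesis unfolding e unfolding c1 kL using a1 a2 by (simp add: power_add ring_distribs mult_ac)
    next
      assume "R \<noteq> []" "even (length L)"
      then show ?thesis unfolding e unfolding c1 kL using a1 a2 a3 a4 by (simp add: power_add ring_distribs mult_ac)
    next
      assume "R \<noteq> []" "\<not> even (length L)"
      then show ?thesis unfolding e unfolding c1 kL using a1 a2 a3 a4 by (simp add: power_add ring_distribs mult_ac)
    qed
  qed
qed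

fun aa :: "real \<Rightarrow> nat \<Rightarrow> real" where
  "aa x 0 = 1"
| "aa x (Suc n) = (\<Sum>j\<le>n. real (n choose j) * (aa x j * aa x (n - j) * kk x j (n - j)))"

fun bb :: "real \<Rightarrow> nat \<Rightarrow> real" where
  "bb x 0 = 0"
| "bb x (Suc n) = (\<Sum>j\<le>n. real (n choose j) *
      (if j = 0 then aa x n else bb x j * aa x (n - j) * kk x j (n - j)))"

lemma sum_pow_card:
  assumes "finite T"
  shows "(\<Sum>A\<in>Pow T. (g (card A) :: real)) = (\<Sum>j\<le>card T. real (card T choose j) * g j)"
proof -
  have "(\<Sum>A\<in>Pow T. g (card A)) = (\<Sum>j\<le>card T. \<Sum>A\<in>{A. A \<in> Pow T \<and> card A = j}. g (card A))"
    using assms by (intro sum.group[symmetric]) (auto intro: card_mono)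
  also have "\<dots> = (\<Sum>j\<le>card T. real (card T choose j) * g j)"
  proof (intro sum.cong refl)
    fix j
    have "(\<Sum>A\<in>{A. A \<in> Pow T \<and> card A = j}. g (card A)) = (\<Sum>A\<in>{A. A \<subseteq> T \<and> card A = j}. g j)"
      by (intro sum.cong) auto
    also have "\<dots> = real (card T choose j) * g j" using n_subsets[OF assms, of j] by simp
    finally show "(\<Sum>A\<in>{A. A \<in> Pow T \<and> card A = j}. g (card A)) = real (card T choose j) * g j" .
  qed
  finally show ?thesis .
qed

lemma sum_prod_arr:
  "(\<Sum>L\<in>arr A. \<Sum>R\<in>arr B. (f L :: real) * g R * k) = k * (\<Sum>L\<in>arr A. f L) * (\<Sum>R\<in>arr B. g R)"
  by (simp add: sum_distrib_left sum_distrib_right mult_ac)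

lemma sum_a:
  assumes "finite S" "\<forall>s\<in>S. 0 < s"
  shows "(\<Sum>w\<in>arr S. x ^ cnt True w) = aa x (card S)"
  using assms
proof (induction "card S" arbitrary: S rule: less_induct)
  case less
  show ?case
  proof (cases "S = {}")
    case True then show ?thesis by (simp add: arr_empty)
  next
    case ne: False
    define m where "m = Max S"
    define T where "T = S - {m}"
    have mS: "m \<in> S" using less.prems ne m_def by simp
    have m0: "0 < m" using mS less.prems by auto
    have Tlt: "\<forall>t\<in>T. 0 < t \<and> t < m"
    proof
      fix t assume t: "t \<in> T"
      then have "t \<in> S" "t \<noteq> m" using T_def by auto
      moreover have "t \<le> m" using \<open>t \<in> S\<close> less.prems m_def by simp
      ultimately show "0 < t \<and> t < m" using less.prems by auto
    qed
    have finT: "finite T" using less.prems T_def by simp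
    have cS: "card S = Suc (card T)" using mS less.prems T_def card_Suc_Diff1 by metis
    have IH: "\<And>B. B \<subseteq> T \<Longrightarrow> (\<Sum>w\<in>arr B. x ^ cnt p w) = aa x (card B)" for p
    proof -
      fix B assume B: "B \<subseteq> T"
      have finB: "finite B" using B finT by (rule finite_subset)
      have "card B < card S" using B finT cS by (simp add: card_mono le_imp_less_Suc)
      moreover have "\<forall>s\<in>B. 0 < s" using B Tlt by auto
      ultimately have "(\<Sum>w\<in>arr B. x ^ cnt True w) = aa x (card B)" using less.hyps finB by blast
      then show "(\<Sum>w\<in>arr B. x ^ cnt p w) = aa x (card B)" using sum_arr_sym[of x B] by (cases p) auto
    qed
    have "(\<Sum>w\<in>arr S. x ^ cnt True w)
        = (\<Sum>A\<in>Pow T. \<Sum>L\<in>arr A. \<Sum>R\<in>arr (T - A). \<Sum>c\<in>{m, -m}. x ^ cnt True (L @ c # R))"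
      by (rule arr_decomp[OF less.prems ne m_def T_def])
    also have "\<dots> = (\<Sum>A\<in>Pow T. \<Sum>L\<in>arr A. \<Sum>R\<in>arr (T - A).
         x ^ cnt True L * x ^ cnt (odd (card A)) R * kk x (card A) (card T - card A))"
    proof (intro sum.cong refl)
      fix A L R assume A: "A \<in> Pow T" and L: "L \<in> arr A" and R: "R \<in> arr (T - A)"
      have bL: "\<forall>y\<in>set L. abs y < m" using L A Tlt unfolding arr_def by auto
      have bR: "\<forall>y\<in>set R. abs y < m" using R A Tlt unfolding arr_def by auto
      have lens: "length L = card A" "length R = card T - card A"
        using arr_length[OF L] arr_length[OF R] A finT by (auto simp: card_Diff_subset finite_subset)
      show "(\<Sum>c\<in>{m, -m}. x ^ cnt True (L @ c # R)) =
          x ^ cnt True L * x ^ cnt (odd (card A)) R * kk x (card A) (card T - card A)"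
        using sum_c[OF m0 bL bR, of x] lens by simp
    qed
    also have "\<dots> = (\<Sum>A\<in>Pow T. kk x (card A) (card T - card A) * aa x (card A) * aa x (card T - card A))"
    proof (intro sum.cong refl)
      fix A assume A: "A \<in> Pow T"
      have "card (T - A) = card T - card A" using A finT by (auto simp: card_Diff_subset finite_subset)
      then show "(\<Sum>L\<in>arr A. \<Sum>R\<in>arr (T - A). x ^ cnt True L * x ^ cnt (odd (card A)) R * kk x (card A) (card T - card A))
          = kk x (card A) (card T - card A) * aa x (card A) * aa x (card T - card A)"
        unfolding sum_prod_arr using IH[of A True] IH[of "T - A" "odd (card A)"] A by auto
    qed
    also have "\<dots> = (\<Sum>j\<le>card T. real (card T choose j) * (aa x j * aa x (card T - j) * kk x j (card T - j)))"
      by (subst sum_pow_card[OF finT]) (simp add: mult_ac)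
    also have "\<dots> = aa x (card S)" by (simp add: cS)
    finally show ?thesis .
  qed
qed

lemma sum_b:
  assumes "finite S" "\<forall>s\<in>S. 0 < s"
  shows "(\<Sum>w\<in>arr S. if w \<noteq> [] \<and> hd w < 0 then x ^ cnt True w else 0) = bb x (card S)"
  using assms
proof (induction "card S" arbitrary: S rule: less_induct)
  case less
  show ?case
  proof (cases "S = {}")
    case True then show ?thesis by (simp add: arr_empty)
  next
    case ne: False
    define m where "m = Max S"
    define T where "T = S - {m}"
    have mS: "m \<in> S" using less.prems ne m_def by simp
    have m0: "0 < m" using mS less.prems by auto
    have Tlt: "\<forall>t\<in>T. 0 < t \<and> t < m"
    proof
      fix t assume t: "t \<in> T"
      then have "t \<in> S" "t \<noteq> m" using T_def by auto
      moreover have "t \<le> m" using \<open>t \<in> S\<close> less.prems m_def by simp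
      ultimately show "0 < t \<and> t < m" using less.prems by auto
    qed
    have finT: "finite T" using less.prems T_def by simp
    have cS: "card S = Suc (card T)" using mS less.prems T_def card_Suc_Diff1 by metis
    have IHa: "\<And>B. B \<subseteq> T \<Longrightarrow> (\<Sum>w\<in>arr B. x ^ cnt p w) = aa x (card B)" for p
    proof -
      fix B assume B: "B \<subseteq> T"
      have finB: "finite B" using B finT by (rule finite_subset)
      have "\<forall>s\<in>B. 0 < s" using B Tlt by auto
      then have "(\<Sum>w\<in>arr B. x ^ cnt True w) = aa x (card B)" using sum_a finB by blast
      then show "(\<Sum>w\<in>arr B. x ^ cnt p w) = aa x (card B)" using sum_arr_sym[of x B] by (cases p) auto
    qed
    have IHb: "\<And>B. B \<subseteq> T \<Longrightarrow> (\<Sum>w\<in>arr B. if w \<noteq> [] \<and> hd w < 0 then x ^ cnt True w else 0) = bb x (card B)"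
    proof -
      fix B assume B: "B \<subseteq> T"
      have finB: "finite B" using B finT by (rule finite_subset)
      have "card B < card S" using B finT cS by (simp add: card_mono le_imp_less_Suc)
      moreover have "\<forall>s\<in>B. 0 < s" using B Tlt by auto
      ultimately show "(\<Sum>w\<in>arr B. if w \<noteq> [] \<and> hd w < 0 then x ^ cnt True w else 0) = bb x (card B)"
        using less.hyps finB by blast
    qed
    define G where "G = (\<lambda>j. if j = 0 then aa x (card T) else bb x j * aa x (card T - j) * kk x j (card T - j))"
    have "(\<Sum>w\<in>arr S. if w \<noteq> [] \<and> hd w < 0 then x ^ cnt True w else 0)
        = (\<Sum>A\<in>Pow T. \<Sum>L\<in>arr A. \<Sum>R\<in>arr (T - A). \<Sum>c\<in>{m, -m}.
            if L @ c # R \<noteq> [] \<and> hd (L @ c # R) < 0 then x ^ cnt True (L @ c # R) else 0)"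
      by (rule arr_decomp[OF less.prems ne m_def T_def])
    also have "\<dots> = (\<Sum>A\<in>Pow T. G (card A))"
    proof (intro sum.cong refl)
      fix A assume A: "A \<in> Pow T"
      have cTA: "card (T - A) = card T - card A" using A finT by (auto simp: card_Diff_subset finite_subset)
      show "(\<Sum>L\<in>arr A. \<Sum>R\<in>arr (T - A). \<Sum>c\<in>{m, -m}.
            if L @ c # R \<noteq> [] \<and> hd (L @ c # R) < 0 then x ^ cnt True (L @ c # R) else 0) = G (card A)"
      proof (cases "A = {}")
        case True
        have "(\<Sum>L\<in>arr A. \<Sum>R\<in>arr (T - A). \<Sum>c\<in>{m, -m}.
            if L @ c # R \<noteq> [] \<and> hd (L @ c # R) < 0 then x ^ cnt True (L @ c # R) else 0)
            = (\<Sum>R\<in>arr T. x ^ cnt False R)"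
        proof -
          have e1: "(\<Sum>L\<in>arr A. \<Sum>R\<in>arr (T - A). \<Sum>c\<in>{m, -m}.
            if L @ c # R \<noteq> [] \<and> hd (L @ c # R) < 0 then x ^ cnt True (L @ c # R) else 0)
            = (\<Sum>R\<in>arr T. \<Sum>c\<in>{m, -m}. if c < 0 then x ^ cnt True (c # R) else 0)" using True by (simp add: arr_empty cong: if_cong)
          show ?thesis unfolding e1
          proof (intro sum.cong refl)
            fix R assume R: "R \<in> arr T"
            have hR: "R \<noteq> [] \<Longrightarrow> hd R < m \<and> -m < hd R" using R Tlt unfolding arr_def
              by (cases R) auto
            have "m \<noteq> -m" using m0 by simp
            then show "(\<Sum>c\<in>{m, -m}. if c < 0 then x ^ cnt True (c # R) else 0) = x ^ cnt False R"
              using m0 hR by (cases "R = []") (auto simp: cnt_cons cnd_def)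
          qed
        qed
        also have "\<dots> = aa x (card T)" using IHa[of T False] by simp
        finally show ?thesis using True G_def by simp
      next
        case False
        have finA: "finite A" using A finT by (auto intro: finite_subset)
        have "(\<Sum>L\<in>arr A. \<Sum>R\<in>arr (T - A). \<Sum>c\<in>{m, -m}.
            if L @ c # R \<noteq> [] \<and> hd (L @ c # R) < 0 then x ^ cnt True (L @ c # R) else 0)
          = (\<Sum>L\<in>arr A. \<Sum>R\<in>arr (T - A).
             (if L \<noteq> [] \<and> hd L < 0 then x ^ cnt True L else 0) * x ^ cnt (odd (card A)) R * kk x (card A) (card T - card A))"
        proof (intro sum.cong refl)
          fix L R assume L: "L \<in> arr A" and R: "R \<in> arr (T - A)"
          have Lne: "L \<noteq> []" using L False unfolding arr_def by auto
          have bL: "\<forall>y\<in>set L. abs y < m" using L A Tlt unfolding arr_def by auto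
          have bR: "\<forall>y\<in>set R. abs y < m" using R A Tlt unfolding arr_def by auto
          have lens: "length L = card A" "length R = card T - card A"
            using arr_length[OF L] arr_length[OF R] cTA by auto
          have "(\<Sum>c\<in>{m, -m}. if L @ c # R \<noteq> [] \<and> hd (L @ c # R) < 0 then x ^ cnt True (L @ c # R) else 0)
              = (if hd L < 0 then 1 else 0) * (\<Sum>c\<in>{m, -m}. x ^ cnt True (L @ c # R))"
            using Lne by (simp add: sum_distrib_left)
          also have "\<dots> = (if L \<noteq> [] \<and> hd L < 0 then x ^ cnt True L else 0) * x ^ cnt (odd (card A)) R * kk x (card A) (card T - card A)"
            using sum_c[OF m0 bL bR, of x] lens Lne by simp
          finally show "(\<Sum>c\<in>{m, -m}. if L @ c # R \<noteq> [] \<and> hd (L @ c # R) < 0 then x ^ cnt True (L @ c # R) else 0)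
              = (if L \<noteq> [] \<and> hd L < 0 then x ^ cnt True L else 0) * x ^ cnt (odd (card A)) R * kk x (card A) (card T - card A)" .
        qed
        also have "\<dots> = kk x (card A) (card T - card A) * bb x (card A) * aa x (card T - card A)"
          unfolding sum_prod_arr using IHb[of A] IHa[of "T - A" "odd (card A)"] A cTA by auto
        also have "\<dots> = G (card A)" using False finA unfolding G_def by (simp add: mult_ac)
        finally show ?thesis .
      qed
    qed
    also have "\<dots> = (\<Sum>j\<le>card T. real (card T choose j) * G j)"
      by (rule sum_pow_card[OF finT])
    also have "\<dots> = bb x (card S)" by (simp add: cS G_def)
    finally show ?thesis .
  qed
qed


lemma Bhat_eq:
  assumes n: "n \<ge> 1"
  shows "Bhat_minus n x = bb x n"
proof -
  define S where "S = {1..int n}"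
  have sp: "signed_perms n = arr S"
  proof
    show "signed_perms n \<subseteq> arr S" unfolding signed_perms_def arr_def S_def by auto
    show "arr S \<subseteq> signed_perms n"
    proof
      fix w assume w: "w \<in> arr S"
      have "length w = n" using arr_length[OF w] unfolding S_def by simp
      then show "w \<in> signed_perms n" using w unfolding signed_perms_def arr_def S_def by auto
    qed
  qed
  have finS: "finite S" and posS: "\<forall>s\<in>S. 0 < s" unfolding S_def by auto
  have cS: "card S = n" unfolding S_def by simp
  have "Bhat_minus n x = (\<Sum>w\<in>arr S. if sval w 1 < 0 then x ^ dhatB w else 0)"
    unfolding Bhat_minus_def sp using finite_arr[OF finS] by (simp add: sum.inter_filter)
  also have "\<dots> = (\<Sum>w\<in>arr S. if w \<noteq> [] \<and> hd w < 0 then x ^ cnt True w else 0)"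
  proof (intro sum.cong refl)
    fix w assume w: "w \<in> arr S"
    have ne: "w \<noteq> []" using arr_length[OF w] cS n by auto
    have sv: "sval w 1 = hd w" using ne by (simp add: sval_def hd_conv_nth)
    have "dhatB w = (if cnd False 0 (hd w) then 1 else 0) + cnt True w"
      using ne by (simp add: dhatB_cnt cnt_cons)
    then show "(if sval w 1 < 0 then x ^ dhatB w else 0) = (if w \<noteq> [] \<and> hd w < 0 then x ^ cnt True w else 0)"
      using ne sv by (auto simp: cnd_def)
  qed
  also have "\<dots> = bb x n" using sum_b[OF finS posS] cS by simp
  finally show ?thesis .
qed

lemma deriv_egf_nth: "fps_deriv (Abs_fps (\<lambda>n. f n / fact n)) $ n = (f (Suc n) :: real) / fact n"
proof -
  have "fps_deriv (Abs_fps (\<lambda>n. f n / fact n)) $ n = of_nat (n+1) * (f (Suc n) / fact (Suc n))" by simp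
  also have "fact (Suc n) = of_nat (n + 1) * (fact n :: real)" by simp
  also have "of_nat (n+1) * (f (Suc n) / (of_nat (n + 1) * fact n)) = f (Suc n) / (fact n :: real)"
    by (simp del: of_nat_Suc)
  finally show ?thesis .
qed

lemma binom_div:
  assumes "j \<le> n"
  shows "real (n choose j) * Y / fact n = Y / (fact j * fact (n - j))"
  using binomial_fact[OF assms, where 'a=real] by (simp add: field_simps)

theorem mainTheorem8:
  fixes x :: real
  assumes "x \<noteq> 1"
  shows "Abs_fps (\<lambda>n. if n = 0 then 0 else Bhat_minus n x / fact n) =
    (fps_cos (x - 1) + fps_sin (x - 1) - 1) /
    (fps_const (x - 1) * fps_cos (x - 1) - fps_const (x + 1) * fps_sin (x - 1))"
proof -
  define Af where "Af = Abs_fps (\<lambda>n. aa x n / fact n)"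
  define Bf where "Bf = Abs_fps (\<lambda>n. bb x n / fact n)"
  define Ef where "Ef = Abs_fps (\<lambda>t. kk x 1 t * aa x t / fact t)"
  have lhs: "Abs_fps (\<lambda>n. if n = 0 then 0 else Bhat_minus n x / fact n) = Bf"
    unfolding Bf_def by (intro fps_ext) (simp add: Bhat_eq)
  have kk1: "j \<noteq> 0 \<Longrightarrow> kk x j t = kk x 1 t" for j t by (simp add: kk_def)
  have hE: "Ef = fps_const (1+x^2) * (Af - 1) + fps_const (1+x)"
    unfolding Ef_def Af_def by (intro fps_ext) (simp add: kk_def power2_eq_square)
  have hA: "fps_deriv Af = fps_const (1+x) * Af + fps_const (1-x) + (Af - 1) * Ef"
  proof (intro fps_ext)
    fix n
    have "fps_deriv Af $ n = aa x (Suc n) / fact n"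
      unfolding Af_def by (rule deriv_egf_nth)
    also have "\<dots> = (\<Sum>j\<le>n. real (n choose j) * (aa x j * aa x (n - j) * kk x j (n - j)) / fact n)"
      by (simp add: sum_divide_distrib)
    also have "\<dots> = (\<Sum>j\<le>n. (if j = 0 then (1+x) * (aa x n / fact n) + (if n = 0 then 1 - x else 0) else 0)
        + (Af - 1) $ j * Ef $ (n - j))"
    proof (intro sum.cong refl)
      fix j assume j: "j \<in> {..n}"
      show "real (n choose j) * (aa x j * aa x (n - j) * kk x j (n - j)) / fact n =
        (if j = 0 then (1+x) * (aa x n / fact n) + (if n = 0 then 1 - x else 0) else 0) + (Af - 1) $ j * Ef $ (n - j)"
        using j by (subst binom_div) (auto simp: Af_def Ef_def kk_def field_simps)
    qed
    also have "\<dots> = (1+x) * (aa x n / fact n) + (if n = 0 then 1 - x else 0) + (\<Sum>j\<le>n. (Af - 1) $ j * Ef $ (n - j))"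
      by (simp add: sum.distrib)
    also have "\<dots> = (fps_const (1+x) * Af + fps_const (1-x) + (Af - 1) * Ef) $ n"
      unfolding fps_add_nth fps_mult_nth[of "Af - 1" Ef] atLeast0AtMost by (simp add: Af_def)
    finally show "fps_deriv Af $ n = (fps_const (1+x) * Af + fps_const (1-x) + (Af - 1) * Ef) $ n" .
  qed
  have hB: "fps_deriv Bf = Af + Bf * Ef"
  proof (intro fps_ext)
    fix n
    have "fps_deriv Bf $ n = bb x (Suc n) / fact n"
      unfolding Bf_def by (rule deriv_egf_nth)
    also have "\<dots> = (\<Sum>j\<le>n. real (n choose j) * (if j = 0 then aa x n else bb x j * aa x (n - j) * kk x j (n - j)) / fact n)"
      by (simp add: sum_divide_distrib)
    also have "\<dots> = (\<Sum>j\<le>n. (if j = 0 then Af $ n else 0) + Bf $ j * Ef $ (n - j))"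
    proof (intro sum.cong refl)
      fix j assume j: "j \<in> {..n}"
      show "real (n choose j) * (if j = 0 then aa x n else bb x j * aa x (n - j) * kk x j (n - j)) / fact n =
        (if j = 0 then Af $ n else 0) + Bf $ j * Ef $ (n - j)"
        using j by (subst binom_div) (auto simp: Af_def Bf_def Ef_def kk_def field_simps)
    qed
    also have "\<dots> = Af $ n + (\<Sum>j\<le>n. Bf $ j * Ef $ (n - j))"
      by (simp add: sum.distrib)
    also have "\<dots> = (Af + Bf * Ef) $ n"
      by (simp add: fps_mult_nth[of Bf Ef] atLeast0AtMost)
    finally show "fps_deriv Bf $ n = (Af + Bf * Ef) $ n" .
  qed
  have A0: "Af $ 0 = 1" unfolding Af_def by simp
  have B0: "Bf $ 0 = 0" unfolding Bf_def by simp
  show ?thesis unfolding lhs by (rule fps_main[OF assms hA hE hB A0 B0])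
qed

end
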